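(* In the FSISIC-with-AWGN setting below, let a codeword $x_1^n\in\mathcal C$ be transmitted from an initial state $s_1\in\mathcal S_0$, let $(\tilde e_1,\dots,\tilde e_n)$ be the resulting edge-path (so $\tilde e_i=(i,s_i,\eta(x_i,s_i),x_i)$ with $s_{i+1}=\eta(x_i,s_i)$), and let $\mathbf c=(c_1,\dots,c_n)$ with $c_i=a(\tilde e_i)$ be the symbol-wise signal-space codeword. The received sequence is $\mathbf y=\mathbf c+\mathbf v$, where $v_1,\dots,v_n$ are i.i.d. $\mathcal N(0,\sigma^2)$. Let $g\in\mathcal P_{\mathcal T}(H)$ be fixed (independent of $\mathbf v$), let $\mathbf p=(p_1,\dots,p_n)$ with $p_i=\sum_{e:\,t(e)=i}g(e)a(e)$ be its signal-space projection, and assume $\mathbf p\neq\mathbf c$. Define $\|\mathbf d\|^2=\sum_{i=1}^n(c_i-p_i)^2$, $\sigma_p^2=\sum_{e\in\mathcal E}g(e)a(e)^2-\sum_{i=1}^np_i^2$, and $d_{gen}^2(\mathbf c,\mathbf p)=\frac{(\|\mathbf d\|^2+\sigma_p^2)^2}{\|\mathbf d\|^2}$. Then the pairwise error probability $$\Pr(\mathbf c\to\mathbf p)=\Pr\Big\{\sum_{e\in\mathcal E}g(e)\big(y_{t(e)}-a(e)\big)^2\le\sum_{i=1}^n(y_i-c_i)^2\Big\}$$ equals $Q\!\left(\frac{d_{gen}(\mathbf c,\mathbf p)}{2\sigma}\right)$, where $d_{gen}=\frac{\|\mathbf d\|^2+\sigma_p^2}{\|\mathbf d\|}$ and $Q(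z)=\int_z^\infty\frac{1}{\sqrt{2\pi}}e^{-u^2/2}\,du$.
   Context: Let $\mathcal C\subseteq\{0,1\}^n$ be a binary linear code with parity-check matrix $H$, and let $\mathcal I$ be the collection of sets of column indices participating in each row (parity check) of $H$. For $I\in\mathcal I$ define $\mathrm{LCP}(I)=\bigcap_{S\subseteq I,\ |S|\text{ odd}}\{\mathbf f\in[0,1]^n:\sum_{i\in S}f_i-\sum_{i\in I\setminus S}f_i\le |S|-1\}$ and $\mathcal P(H)=\bigcap_{I\in\mathcal I}\mathrm{LCP}(I)$. FSISIC with AWGN: finite state set $\mathcal S$, functions $\eta:\{0,1\}\times\mathcal S\to\mathcal S$ (next state) and $\alpha:\mathcal S\times\{0,1\}\to\mathbb R$ (noiseless output), noise variance $\sigma^2>0$, and a nonempty set $\mathcal S_0\subseteq\mathcal S$ of allowed initial states. The trellis edge set is $\mathcal E=\{(i,s,\eta(x,s),x): i\in\{1,\dots,n\},\ x\in\{0,1\},\ s\in\mathcal S\text{ (with } s\in\mathcal S_0\text{ if } i=1)\}$; for $e=(i,s,s',x)$ write $t(e)=i$, $s(e)=s$, $s'(e)=s'$, $x(e)=x$, $a(e)=\alpha(s,x)$. The trellis polytope $\mathcal T$ is the set of $g:\mathcal E\to[0,1]$ with $\sum_{e:\,t(e)=1}g(e)=1$ and, for every $i=1,\dots,n-1$ and $j\in\mathcal S$, $\sum_{e:\,t(e)=i,\,s'(e)=j}g(e)=\sum_{e:\,t(e)=i+1,\,s(e)=j}g(e)$. The projection $\mathcal Q$ maps $g$ to $\mathbf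 f=\mathcal Qg$ with $f_i=\sum_{e:\,t(e)=i,\,x(e)=1}g(e)$. The trellis-wise relaxed polytope is $\mathcal P_{\mathcal T}(H)=\{g\in\mathcal T:\mathcal Qg\in\mathcal P(H)\}$. *)

theory Defs
  imports "HOL-Probability.Probability"
begin

text \<open>Trellis edges are tuples (i, s, s', x): time index, current state, next state, input bit.
  Bits are represented by bool (True = 1). The state set S is the finite type 's.\<close>

type_synonym 's edge = "nat \<times> 's \<times> 's \<times> bool"

definition t_of :: "'s edge \<Rightarrow> nat" where "t_of e = fst e"
definition s_of :: "'s edge \<Rightarrow> 's" where "s_of e = fst (snd e)"
definition s'_of :: "'s edge \<Rightarrow> 's" where "s'_of e = fst (snd (snd e))"
definition x_of :: "'s edge \<Rightarrow> bool" where "x_of e = snd (snd (snd e))"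
definition a_of :: "('s \<Rightarrow> bool \<Rightarrow> real) \<Rightarrow> 's edge \<Rightarrow> real" where
  "a_of \<alpha> e = \<alpha> (s_of e) (x_of e)"

definition trellis_edges :: "nat \<Rightarrow> 's set \<Rightarrow> (bool \<Rightarrow> 's \<Rightarrow> 's) \<Rightarrow> 's edge set" where
  "trellis_edges n S0 \<eta> =
     {(i, s, \<eta> x s, x) | i s x. i \<in> {1..n} \<and> (i = 1 \<longrightarrow> s \<in> S0)}"

text \<open>Parity-check matrix H with m rows (indexed 1..m) and n columns (indexed 1..n);
  H j i = True means entry (j,i) equals 1.\<close>

definition check_sets :: "nat \<Rightarrow> nat \<Rightarrow> (nat \<Rightarrow> nat \<Rightarrow> bool) \<Rightarrow> nat set set" where
  "check_sets m n H = {{i \<in> {1..n}. H j i} | j. j \<in> {1..m}}"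

definition code_of :: "nat \<Rightarrow> nat \<Rightarrow> (nat \<Rightarrow> nat \<Rightarrow> bool) \<Rightarrow> (nat \<Rightarrow> bool) set" where
  "code_of m n H = {x. \<forall>I \<in> check_sets m n H. even (card {i \<in> I. x i})}"

definition LCP :: "nat \<Rightarrow> nat set \<Rightarrow> (nat \<Rightarrow> real) set" where
  "LCP n I = {f. (\<forall>i \<in> {1..n}. 0 \<le> f i \<and> f i \<le> 1) \<and>
      (\<forall>S \<subseteq> I. odd (card S) \<longrightarrow>
         (\<Sum>i\<in>S. f i) - (\<Sum>i\<in>I - S. f i) \<le> real (card S) - 1)}"

definition relaxed_polytope :: "nat \<Rightarrow> nat \<Rightarrow> (nat \<Rightarrow> nat \<Rightarrow> bool) \<Rightarrow> (nat \<Rightarrow> real) set" where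
  "relaxed_polytope m n H = {f. (\<forall>i \<in> {1..n}. 0 \<le> f i \<and> f i \<le> 1) \<and>
      (\<forall>I \<in> check_sets m n H. f \<in> LCP n I)}"

definition trellis_polytope :: "nat \<Rightarrow> 's set \<Rightarrow> (bool \<Rightarrow> 's \<Rightarrow> 's) \<Rightarrow> ('s edge \<Rightarrow> real) set" where
  "trellis_polytope n S0 \<eta> = {g.
     (\<forall>e \<in> trellis_edges n S0 \<eta>. 0 \<le> g e \<and> g e \<le> 1) \<and>
     (\<Sum>e \<in> {e \<in> trellis_edges n S0 \<eta>. t_of e = 1}. g e) = 1 \<and>
     (\<forall>i \<in> {1..<n}. \<forall>j.
        (\<Sum>e \<in> {e \<in> trellis_edges n S0 \<eta>. t_of e = i \<and> s'_of e = j}. g e) =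
        (\<Sum>e \<in> {e \<in> trellis_edges n S0 \<eta>. t_of e = Suc i \<and> s_of e = j}. g e))}"

definition proj_Q :: "nat \<Rightarrow> 's set \<Rightarrow> (bool \<Rightarrow> 's \<Rightarrow> 's) \<Rightarrow> ('s edge \<Rightarrow> real) \<Rightarrow> nat \<Rightarrow> real" where
  "proj_Q n S0 \<eta> g i = (\<Sum>e \<in> {e \<in> trellis_edges n S0 \<eta>. t_of e = i \<and> x_of e}. g e)"

definition trellis_relaxed_polytope ::
  "nat \<Rightarrow> nat \<Rightarrow> (nat \<Rightarrow> nat \<Rightarrow> bool) \<Rightarrow> 's set \<Rightarrow> (bool \<Rightarrow> 's \<Rightarrow> 's) \<Rightarrow> ('s edge \<Rightarrow> real) set" where
  "trellis_relaxed_polytope m n H S0 \<eta> =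
     {g \<in> trellis_polytope n S0 \<eta>. proj_Q n S0 \<eta> g \<in> relaxed_polytope m n H}"

definition Qfun :: "real \<Rightarrow> real" where
  "Qfun z = (LBINT u:{z..}. (1 / sqrt (2 * pi)) * exp (- (u\<^sup>2) / 2))"

definition noise_measure :: "nat \<Rightarrow> real \<Rightarrow> (nat \<Rightarrow> real) measure" where
  "noise_measure n \<sigma> = PiM {1..n} (\<lambda>_. density lborel (normal_density 0 \<sigma>))"

end

theory Submission
  imports Defs
begin

lemma coord_indep:
  fixes N :: "real measure" and I :: "nat set"
  assumes pN: "prob_space N" and sN: "sets N = sets borel" and I: "I \<noteq> {}"
  shows "prob_space.indep_vars (PiM I (\<lambda>_. N)) (\<lambda>_. borel) (\<lambda>i \<omega>. \<omega> i) I"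
proof -
  define M where "M = PiM I (\<lambda>_. N)"
  interpret prob_space M unfolding M_def by (intro prob_space_PiM pN)
  have sM: "sets M = sets (PiM I (\<lambda>_. borel))"
    unfolding M_def by (intro sets_PiM_cong) (auto simp: sN)
  have rv: "random_variable borel (\<lambda>\<omega>. \<omega> i)" if "i \<in> I" for i
    unfolding M_def using that by (simp add: measurable_cong_sets[OF refl sN[symmetric]])
  have d1: "distr M (PiM I (\<lambda>_. borel)) (\<lambda>x. \<lambda>i\<in>I. x i) = M"
  proof (rule measure_eqI)
    show "sets (distr M (PiM I (\<lambda>_. borel)) (\<lambda>x. \<lambda>i\<in>I. x i)) = sets M" using sM by simp
  next
    fix A assume A: "A \<in> sets (distr M (PiM I (\<lambda>_. borel)) (\<lambda>x. \<lambda>i\<in>I. x i))"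
    have meas: "(\<lambda>x. \<lambda>i\<in>I. x i) \<in> measurable M (PiM I (\<lambda>_. borel))"
      using rv by (intro measurable_restrict) auto
    have "(\<lambda>x. \<lambda>i\<in>I. x i) -` A \<inter> space M = A"
    proof -
      have "A \<subseteq> space M" using A sM sets.sets_into_space by (metis sets_distr)
      moreover have "x \<in> space M \<Longrightarrow> (\<lambda>i\<in>I. x i) = x" for x
        unfolding M_def by (auto simp: space_PiM PiE_def extensional_def restrict_def)
      ultimately show ?thesis by auto
    qed
    then show "emeasure (distr M (PiM I (\<lambda>_. borel)) (\<lambda>x. \<lambda>i\<in>I. x i)) A = emeasure M A"
      using A meas by (simp add: emeasure_distr)
  qed
  have d2: "distr M borel (\<lambda>\<omega>. \<omega> i) = N" if "i \<in> I" for i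
  proof -
    have "distr M borel (\<lambda>\<omega>. \<omega> i) = distr M N (\<lambda>\<omega>. \<omega> i)"
      by (rule distr_cong) (auto simp: sN)
    also have "\<dots> = N" unfolding M_def by (rule distr_PiM_component[OF pN that])
    finally show ?thesis .
  qed
  have "(\<Pi>\<^sub>M i\<in>I. distr M borel (\<lambda>\<omega>. \<omega> i)) = M"
    unfolding M_def[symmetric] by (subst M_def, rule PiM_cong) (auto simp: d2)
  then show ?thesis
    using indep_vars_iff_distr_eq_PiM'[OF I rv] d1 unfolding M_def by simp
qed

lemma gauss_lin:
  fixes \<sigma> K :: real and d :: "nat \<Rightarrow> real" and n :: nat
  assumes sp: "\<sigma> > 0" and pos: "(\<Sum>i=1..n. (d i)\<^sup>2) > 0"
  shows "measure (noise_measure n \<sigma>) {v \<in> space (noise_measure n \<sigma>). K + 2 * (\<Sum>i=1..n. d i * v i) \<le> 0}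
         = Qfun (K / (2 * \<sigma> * sqrt (\<Sum>i=1..n. (d i)\<^sup>2)))"
proof -
  define N where "N = density lborel (normal_density 0 \<sigma>)"
  define I where "I = {1..n}"
  define M where "M = PiM I (\<lambda>_. N)"
  have Mn: "noise_measure n \<sigma> = M" unfolding M_def N_def I_def noise_measure_def ..
  have pN: "prob_space N" unfolding N_def using sp by (rule prob_space_normal_density)
  have sN: "sets N = sets borel" unfolding N_def by simp
  have I0: "I \<noteq> {}" using pos unfolding I_def by (cases "n = 0") auto
  have fI: "finite I" unfolding I_def by simp
  interpret prob_space M unfolding M_def by (intro prob_space_PiM pN)
  have indep: "indep_vars (\<lambda>_. borel) (\<lambda>i \<omega>. \<omega> i) I"
    unfolding M_def by (rule coord_indep[OF pN sN I0])
  have dist: "distributed M lborel (\<lambda>\<omega>. \<omega> i) (normal_density 0 \<sigma>)" if "i \<in> I" for i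
  proof -
    have "distr M lborel (\<lambda>\<omega>. \<omega> i) = distr M N (\<lambda>\<omega>. \<omega> i)"
      by (rule distr_cong) (auto simp: sN)
    also have "\<dots> = N" unfolding M_def by (rule distr_PiM_component[OF pN that])
    finally have e: "distr M lborel (\<lambda>\<omega>. \<omega> i) = N" .
    have "(\<lambda>\<omega>. \<omega> i) \<in> measurable M N" unfolding M_def by (rule measurable_component_singleton[OF that])
    then have m: "(\<lambda>\<omega>. \<omega> i) \<in> measurable M lborel"
      using measurable_cong_sets[OF refl, of N lborel M] sN by simp
    show ?thesis unfolding distributed_def
      using e m by (simp add: N_def)
  qed
  define J where "J = {i \<in> I. d i \<noteq> 0}"
  have JI: "J \<subseteq> I" unfolding J_def by auto
  have fJ: "finite J" using fI JI finite_subset by blast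
  have J0: "J \<noteq> {}"
  proof
    assume "J = {}"
    then have "\<forall>i\<in>I. d i = 0" unfolding J_def by auto
    then show False using pos unfolding I_def by simp
  qed
  define s where "s = \<sigma> * sqrt (\<Sum>i=1..n. (d i)\<^sup>2)"
  have s0: "s > 0" unfolding s_def using sp pos by simp
  have sumJ: "(\<Sum>i\<in>J. (\<bar>d i\<bar> * \<sigma>)\<^sup>2) = \<sigma>\<^sup>2 * (\<Sum>i=1..n. (d i)\<^sup>2)"
  proof -
    have "(\<Sum>i\<in>J. (\<bar>d i\<bar> * \<sigma>)\<^sup>2) = (\<Sum>i\<in>I. (\<bar>d i\<bar> * \<sigma>)\<^sup>2)"
      by (rule sum.mono_neutral_left[OF fI JI]) (auto simp: J_def)
    also have "\<dots> = \<sigma>\<^sup>2 * (\<Sum>i=1..n. (d i)\<^sup>2)"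
      unfolding I_def by (simp add: sum_distrib_left power_mult_distrib mult.commute)
    finally show ?thesis .
  qed
  have "distributed M lborel (\<lambda>x. \<Sum>i\<in>J. 0 + d i * x i)
          (normal_density (\<Sum>i\<in>J. 0 + d i * 0) (sqrt (\<Sum>i\<in>J. (\<bar>d i\<bar> * \<sigma>)\<^sup>2)))"
  proof (rule sum_indep_normal[OF fJ J0])
    show "indep_vars (\<lambda>i. borel) (\<lambda>i x. 0 + d i * x i) J"
      using indep_vars_compose2[OF indep_vars_subset[OF indep JI], of "\<lambda>i y. 0 + d i * y" "\<lambda>_. borel"]
      by simp
    show "0 < \<bar>d i\<bar> * \<sigma>" if "i \<in> J" for i using that sp by (auto simp: J_def)
    show "distributed M lborel (\<lambda>x. 0 + d i * x i) (normal_density (0 + d i * 0) (\<bar>d i\<bar> * \<sigma>))"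
      if "i \<in> J" for i
      using that by (intro normal_density_affine dist sp) (auto simp: J_def)
  qed
  moreover have "(\<lambda>x. \<Sum>i\<in>J. 0 + d i * x i) = (\<lambda>x. \<Sum>i=1..n. d i * x i)"
  proof
    fix x
    show "(\<Sum>i\<in>J. 0 + d i * x i) = (\<Sum>i=1..n. d i * x i)"
      unfolding I_def[symmetric] by (simp, rule sum.mono_neutral_left[OF fI JI]) (auto simp: J_def)
  qed
  moreover have "sqrt (\<Sum>i\<in>J. (\<bar>d i\<bar> * \<sigma>)\<^sup>2) = s"
    unfolding sumJ s_def using sp by (simp add: real_sqrt_mult)
  ultimately have S: "distributed M lborel (\<lambda>x. \<Sum>i=1..n. d i * x i) (normal_density 0 s)"
    by simp
  define Z where "Z = (\<lambda>x. 0 + (-1/s) * (\<Sum>i=1..n. d i * x i))"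
  have "distributed M lborel Z (normal_density (0 + (-1/s) * 0) (\<bar>-1/s\<bar> * s))"
    unfolding Z_def using s0 by (intro normal_density_affine S) auto
  then have Zd: "distributed M lborel Z std_normal_density" using s0 by simp
  have Zm: "Z \<in> borel_measurable M" using distributed_measurable[OF Zd] by simp
  define z where "z = K / (2 * s)"
  have seteq: "{v \<in> space M. K + 2 * (\<Sum>i=1..n. d i * v i) \<le> 0} = Z -` {z..} \<inter> space M"
  proof -
    have "K + 2 * y \<le> 0 \<longleftrightarrow> z \<le> 0 + (-1/s) * y" for y
      unfolding z_def using s0 by (simp add: field_simps, linarith)
    then show ?thesis unfolding Z_def by auto
  qed
  have "measure M (Z -` {z..} \<inter> space M) = measure (distr M lborel Z) {z..}"
    using Zm by (simp add: measure_distr)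
  also have "\<dots> = measure (density lborel std_normal_density) {z..}"
    using distributed_distr_eq_density[OF Zd] by simp
  also have "\<dots> = (LBINT u:{z..}. std_normal_density u)"
  proof -
    have "emeasure (density lborel std_normal_density) {z..} = (\<integral>\<^sup>+x. ennreal (indicator {z..} x * std_normal_density x) \<partial>lborel)"
      by (subst emeasure_density) (auto intro!: nn_integral_cong split: split_indicator)
    also have "\<dots> = ennreal (\<integral>x. indicator {z..} x * std_normal_density x \<partial>lborel)"
      by (rule nn_integral_eq_integral) (use integrable_real_mult_indicator[of "{z..}" lborel std_normal_density] in \<open>auto simp: mult.commute\<close>)
    finally show ?thesis unfolding measure_def set_lebesgue_integral_def
      by (simp add: integral_nonneg_AE)
  qed
  also have "\<dots> = Qfun z" unfolding Qfun_def std_normal_density_def ..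
  finally show ?thesis unfolding Mn seteq z_def s_def by (simp add: mult.assoc)
qed

lemma sq_expand:
  fixes g a :: "'e \<Rightarrow> real"
  shows "(\<Sum>e\<in>A. g e * (u - a e)\<^sup>2) = u\<^sup>2 * (\<Sum>e\<in>A. g e) - 2 * u * (\<Sum>e\<in>A. g e * a e) + (\<Sum>e\<in>A. g e * (a e)\<^sup>2)"
  by (simp add: power2_diff algebra_simps sum.distrib sum_subtractf sum_distrib_left sum_distrib_right)

theorem theorem5:
  fixes m n :: nat
    and H :: "nat \<Rightarrow> nat \<Rightarrow> bool"
    and \<eta> :: "bool \<Rightarrow> 's::finite \<Rightarrow> 's"
    and \<alpha> :: "'s \<Rightarrow> bool \<Rightarrow> real"
    and \<sigma> :: real
    and S0 :: "'s set"
    and x :: "nat \<Rightarrow> bool"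
    and st :: "nat \<Rightarrow> 's"
    and g :: "'s edge \<Rightarrow> real"
  assumes sigma_pos: "\<sigma> > 0"
    and S0_ne: "S0 \<noteq> {}"
    and codeword: "x \<in> code_of m n H"
    and init: "st 1 \<in> S0"
    and path: "\<forall>i \<in> {1..<n}. st (Suc i) = \<eta> (x i) (st i)"
    and g_in: "g \<in> trellis_relaxed_polytope m n H S0 \<eta>"
    and p_ne_c: "(\<lambda>i \<in> {1..n}. \<Sum>e \<in> {e \<in> trellis_edges n S0 \<eta>. t_of e = i}. g e * a_of \<alpha> e)
                 \<noteq> (\<lambda>i \<in> {1..n}. \<alpha> (st i) (x i))"
  shows
    "let E = trellis_edges n S0 \<eta>;
         c = (\<lambda>i. \<alpha> (st i) (x i));
         p = (\<lambda>i. \<Sum>e \<in> {e \<in> E. t_of e = i}. g e * a_of \<alpha> e);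
         d2 = (\<Sum>i=1..n. (c i - p i)\<^sup>2);
         \<sigma>p2 = (\<Sum>e \<in> E. g e * (a_of \<alpha> e)\<^sup>2) - (\<Sum>i=1..n. (p i)\<^sup>2);
         dgen = (d2 + \<sigma>p2) / sqrt d2;
         M = noise_measure n \<sigma>
     in measure M {v \<in> space M.
          (\<Sum>e \<in> E. g e * ((c (t_of e) + v (t_of e)) - a_of \<alpha> e)\<^sup>2)
            \<le> (\<Sum>i=1..n. ((c i + v i) - c i)\<^sup>2)}
        = Qfun (dgen / (2 * \<sigma>))"
proof -
  define E where "E = trellis_edges n S0 \<eta>"
  define c where "c = (\<lambda>i. \<alpha> (st i) (x i))"
  define p where "p = (\<lambda>i. \<Sum>e \<in> {e \<in> E. t_of e = i}. g e * a_of \<alpha> e)"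
  define d2 where "d2 = (\<Sum>i=1..n. (c i - p i)\<^sup>2)"
  define \<sigma>p2 where "\<sigma>p2 = (\<Sum>e \<in> E. g e * (a_of \<alpha> e)\<^sup>2) - (\<Sum>i=1..n. (p i)\<^sup>2)"
  define A where "A = (\<lambda>i. \<Sum>e \<in> {e \<in> E. t_of e = i}. g e * (a_of \<alpha> e)\<^sup>2)"
  define Gs where "Gs = (\<lambda>i. \<Sum>e \<in> {e \<in> E. t_of e = i}. g e)"
  have finE: "finite E"
  proof -
    have "E \<subseteq> {1..n} \<times> (UNIV :: ('s \<times> 's \<times> bool) set)"
      unfolding E_def trellis_edges_def by auto
    then show ?thesis by (rule finite_subset) auto
  qed
  have tE: "t_of ` E \<subseteq> {1..n}"
    unfolding E_def trellis_edges_def t_of_def by auto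
  have split: "(\<Sum>e\<in>E. F e) = (\<Sum>i=1..n. \<Sum>e\<in>{e\<in>E. t_of e = i}. F e)" for F :: "'s edge \<Rightarrow> real"
    using sum.group[OF finE finite_atLeastAtMost tE, of F] by simp
  have gT: "g \<in> trellis_polytope n S0 \<eta>" using g_in unfolding trellis_relaxed_polytope_def by simp
  have G1: "Gs 1 = 1" using gT unfolding trellis_polytope_def Gs_def E_def by simp
  have flow: "\<And>i j. i \<in> {1..<n} \<Longrightarrow>
        (\<Sum>e \<in> {e \<in> E. t_of e = i \<and> s'_of e = j}. g e) =
        (\<Sum>e \<in> {e \<in> E. t_of e = Suc i \<and> s_of e = j}. g e)"
    using gT unfolding trellis_polytope_def E_def by blast
  have Gall: "\<forall>i. 1 \<le> i \<longrightarrow> i \<le> n \<longrightarrow> Gs i = 1"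
  proof
    fix i show "1 \<le> i \<longrightarrow> i \<le> n \<longrightarrow> Gs i = 1"
    proof (induction i)
      case 0 then show ?case by simp
    next
      case (Suc k)
      show ?case
      proof (cases "k = 0")
        case True then show ?thesis using G1 by simp
      next
        case False
        show ?thesis
        proof (intro impI)
          assume "1 \<le> Suc k" "Suc k \<le> n"
          then have kI: "k \<in> {1..<n}" using False by auto
          have fk: "finite {e\<in>E. t_of e = k}" "finite {e\<in>E. t_of e = Suc k}" using finE by auto
          have "Gs (Suc k) = (\<Sum>j\<in>UNIV. \<Sum>e \<in> {e \<in> E. t_of e = Suc k \<and> s_of e = j}. g e)"
            unfolding Gs_def using sum.group[OF fk(2) finite_class.finite_UNIV, of s_of g] by (simp add: conj_assoc)
          also have "\<dots> = (\<Sum>j\<in>UNIV. \<Sum>e \<in> {e \<in> E. t_of e = k \<and> s'_of e = j}. g e)"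
            using flow[OF kI] by simp
          also have "\<dots> = Gs k"
            unfolding Gs_def using sum.group[OF fk(1) finite_class.finite_UNIV, of s'_of g] by (simp add: conj_assoc)
          also have "\<dots> = 1" using Suc.IH kI by auto
          finally show "Gs (Suc k) = 1" .
        qed
      qed
    qed
  qed
  have n1: "n \<ge> 1"
  proof (rule ccontr)
    assume "\<not> n \<ge> 1"
    then have "{1..n} = ({}::nat set)" by auto
    then show False using p_ne_c by (simp add: restrict_def)
  qed
  have d2pos: "d2 > 0"
  proof -
    obtain i where i: "i \<in> {1..n}" "p i \<noteq> c i"
      using p_ne_c unfolding p_def c_def E_def by (auto simp: restrict_def fun_eq_iff split: if_splits)
    have "0 < (c i - p i)\<^sup>2" using i by simp
    also have "\<dots> \<le> d2" unfolding d2_def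
      by (rule member_le_sum) (use i in auto)
    finally show ?thesis .
  qed
  have ident: "(\<Sum>e\<in>E. g e * ((c (t_of e) + v (t_of e)) - a_of \<alpha> e)\<^sup>2) - (\<Sum>i=1..n. ((c i + v i) - c i)\<^sup>2)
       = (d2 + \<sigma>p2) + 2 * (\<Sum>i=1..n. (c i - p i) * v i)" for v :: "nat \<Rightarrow> real"
  proof -
    have "(\<Sum>e\<in>E. g e * ((c (t_of e) + v (t_of e)) - a_of \<alpha> e)\<^sup>2)
        = (\<Sum>i=1..n. \<Sum>e\<in>{e\<in>E. t_of e = i}. g e * ((c i + v i) - a_of \<alpha> e)\<^sup>2)"
      unfolding split by (intro sum.cong refl) auto
    also have "\<dots> = (\<Sum>i=1..n. (c i + v i)\<^sup>2 - 2 * (c i + v i) * p i + A i)"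
      by (intro sum.cong refl, subst sq_expand) (use Gall in \<open>auto simp: Gs_def p_def A_def\<close>)
    finally have L: "(\<Sum>e\<in>E. g e * ((c (t_of e) + v (t_of e)) - a_of \<alpha> e)\<^sup>2)
        = (\<Sum>i=1..n. (c i + v i)\<^sup>2 - 2 * (c i + v i) * p i + A i)" .
    have S: "\<sigma>p2 = (\<Sum>i=1..n. A i - (p i)\<^sup>2)"
      unfolding \<sigma>p2_def A_def split[of "\<lambda>e. g e * (a_of \<alpha> e)\<^sup>2"] by (simp add: sum_subtractf)
    have "(d2 + \<sigma>p2) + 2 * (\<Sum>i=1..n. (c i - p i) * v i)
       = (\<Sum>i=1..n. (c i - p i)\<^sup>2 + (A i - (p i)\<^sup>2) + 2 * ((c i - p i) * v i))"
      unfolding d2_def S by (simp add: sum.distrib sum_distrib_left)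
    also have "\<dots> = (\<Sum>i=1..n. ((c i + v i)\<^sup>2 - 2 * (c i + v i) * p i + A i) - ((c i + v i) - c i)\<^sup>2)"
      by (intro sum.cong refl) (simp add: power2_eq_square algebra_simps)
    finally show ?thesis unfolding L by (simp add: sum_subtractf)
  qed
  define M where "M = noise_measure n \<sigma>"
  have seteq: "{v \<in> space M.
          (\<Sum>e \<in> E. g e * ((c (t_of e) + v (t_of e)) - a_of \<alpha> e)\<^sup>2)
            \<le> (\<Sum>i=1..n. ((c i + v i) - c i)\<^sup>2)}
     = {v \<in> space M. (d2 + \<sigma>p2) + 2 * (\<Sum>i=1..n. (c i - p i) * v i) \<le> 0}"
  proof (intro Collect_cong conj_cong refl)
    fix v :: "nat \<Rightarrow> real"
    show "((\<Sum>e \<in> E. g e * ((c (t_of e) + v (t_of e)) - a_of \<alpha> e)\<^sup>2)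
            \<le> (\<Sum>i=1..n. ((c i + v i) - c i)\<^sup>2)) = ((d2 + \<sigma>p2) + 2 * (\<Sum>i=1..n. (c i - p i) * v i) \<le> 0)"
      using ident[of v] by linarith
  qed
  have Q: "measure M {v \<in> space M. (d2 + \<sigma>p2) + 2 * (\<Sum>i=1..n. (c i - p i) * v i) \<le> 0}
        = Qfun ((d2 + \<sigma>p2) / (2 * \<sigma> * sqrt d2))"
    unfolding M_def d2_def by (rule gauss_lin[OF sigma_pos]) (use d2pos in \<open>simp add: d2_def\<close>)
  have arg: "\<And>a b. a / (2 * \<sigma> * sqrt b) = a / sqrt b / (2 * \<sigma>)"
    by (simp add: field_simps)
  show ?thesis
    unfolding Let_def E_def[symmetric] c_def[symmetric] M_def[symmetric] seteq Q
    by (simp only: arg d2_def \<sigma>p2_def p_def)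
qed

end
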